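(* Let $A$ be an infinite alphabet and let $\tilde f:A^2\to\{0,1\}$ satisfy: (i) for each $x\in A$ there is $y\in A$ with $\tilde f(x,y)=1$; (ii) the set $\{x\in A: \tilde f(x,y)=1$ for infinitely many $y\in A\}$ is finite and non-empty. Let $f$ be the $1$-step shift map induced by $\tilde f$. Then the $1$-step shift space $X_f$ contains only finitely many elements of length $1$ (namely those $x\in A$ with $\tilde f(x,y)=1$ for infinitely many $y$), and $X_f$ is not conjugate to any $0$-step shift space (i.e. to any full shift $\Sigma_B$). In particular this applies to $\tilde f$ defined, for a fixed $x_0\in A$, by $\tilde f(x,y)=1$ if $x=x_0$, $\tilde f(x,y)=1$ if $x\ne x_0$ and $y=x$, and $\tilde f(x,y)=0$ otherwise.
   Context: For an alphabet $A$, $\Sigma_A$ is the set of infinite sequences over $A$ together with, when $A$ is infinite, all finite sequences (including the empty sequence $\emptyset$); for finite $A$ it is just the infinite sequences. The topology is generated by the generalized cylinders $Z(x,F)=\{y: y_i=x_i\ (1\le i\le k),\ y_{k+1}\notin F\}$ ($x=(x_1,\dots,x_k)\ne\emptyset$, $F\subseteq A$ finite) and $Z(\emptyset,F)=\{y: y_1\notin F\}$; $l(x)$ denotes length ($\infty$ for infinite sequences); $\sigma$ deletes the first letter. A subblock of $x$ is a finite word $u$ with $x=vuz$. For $f:\bigcup_{k\ge1}A^k\to\{0,1\}$: $X_f^{inf}=\{x\in A^{\mathbb N}: f(u)=1$ for all nonempty subblocks $u$ of $x\}$, $X_f^{fin}=\{x$ finite: there are infinitely many $a\in A$ with $xay\in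 X_f^{inf}$ for some infinite $y\}$, $X_f=X_f^{inf}\cup X_f^{fin}$. For $N\ge0$ and $\tilde f:A^{N+1}\to\{0,1\}$ the $N$-step shift map induced by $\tilde f$ is $f(x)=1$ if $|x|\le N$ and $f(x)=\prod_{i=1}^{|x|-N}\tilde f(x_i,\dots,x_{N+i})$ if $|x|\ge N+1$; $N$-step shift spaces are the sets $X_g$ for such induced maps $g$ (over some alphabet $B$). A conjugacy is a continuous, shift-commuting bijection between shift spaces preserving length $l$. *)

theory Defs
  imports "HOL-Analysis.Analysis" "HOL-Library.Extended_Nat"
begin

text \<open>Sequences: finite words (lists) or infinite sequences (functions on nat, index 0 = first letter).\<close>
datatype 'a seq = Fin "'a list" | Inf "nat \<Rightarrow> 'a"

definition Sigma_seq :: "'a set \<Rightarrow> 'a seq set" where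
  "Sigma_seq A = {Inf w | w. range w \<subseteq> A}
     \<union> (if infinite A then {Fin xs | xs. set xs \<subseteq> A} else {})"

fun len :: "'a seq \<Rightarrow> enat" where
  "len (Fin xs) = enat (length xs)"
| "len (Inf w) = \<infinity>"

text \<open>The shift sigma (deletes the first letter; the empty sequence is mapped to itself).\<close>
fun shift :: "'a seq \<Rightarrow> 'a seq" where
  "shift (Fin xs) = Fin (tl xs)"
| "shift (Inf w) = Inf (\<lambda>n. w (Suc n))"

fun letter :: "'a seq \<Rightarrow> nat \<Rightarrow> 'a" where
  "letter (Fin xs) i = xs ! i"
| "letter (Inf w) i = w i"

definition has_prefix :: "'a seq \<Rightarrow> 'a list \<Rightarrow> bool" where
  "has_prefix y x \<longleftrightarrow> enat (length x) \<le> len y \<and> (\<forall>i<length x. letter y i = x ! i)"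

definition cyl :: "'a set \<Rightarrow> 'a list \<Rightarrow> 'a set \<Rightarrow> 'a seq set" where
  "cyl A x F = {y \<in> Sigma_seq A. has_prefix y x \<and>
       (enat (length x) < len y \<longrightarrow> letter y (length x) \<notin> F)}"

definition seq_top :: "'a set \<Rightarrow> 'a seq topology" where
  "seq_top A = topology_generated_by {cyl A x F | x F. set x \<subseteq> A \<and> finite F \<and> F \<subseteq> A}"

definition conc :: "'a list \<Rightarrow> (nat \<Rightarrow> 'a) \<Rightarrow> (nat \<Rightarrow> 'a)" where
  "conc xs w = (\<lambda>n. if n < length xs then xs ! n else w (n - length xs))"

text \<open>Shift spaces X_f for f : words \<rightarrow> {0,1}. The nonempty subblocks of an
  infinite sequence w are exactly the words map w [i..<i+n] with n \<ge> 1.\<close>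
definition Xinf :: "'a set \<Rightarrow> ('a list \<Rightarrow> nat) \<Rightarrow> 'a seq set" where
  "Xinf A f = {Inf w | w. range w \<subseteq> A \<and> (\<forall>i n. 1 \<le> n \<longrightarrow> f (map w [i..<i+n]) = 1)}"

definition Xfin :: "'a set \<Rightarrow> ('a list \<Rightarrow> nat) \<Rightarrow> 'a seq set" where
  "Xfin A f = {Fin xs | xs. set xs \<subseteq> A \<and>
      infinite {a \<in> A. \<exists>y. range y \<subseteq> A \<and> Inf (conc (xs @ [a]) y) \<in> Xinf A f}}"

definition Xf :: "'a set \<Rightarrow> ('a list \<Rightarrow> nat) \<Rightarrow> 'a seq set" where
  "Xf A f = Xinf A f \<union> Xfin A f"

text \<open>N-step shift map induced by ft : A^(N+1) \<rightarrow> {0,1} (ft given on words of length N+1).\<close>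
definition induced :: "nat \<Rightarrow> ('a list \<Rightarrow> nat) \<Rightarrow> 'a list \<Rightarrow> nat" where
  "induced N ft x = (if length x \<le> N then 1
      else (\<Prod>i<length x - N. ft (take (N+1) (drop i x))))"

definition induced1 :: "('a \<Rightarrow> 'a \<Rightarrow> nat) \<Rightarrow> 'a list \<Rightarrow> nat" where
  "induced1 ft = induced 1 (\<lambda>u. ft (u ! 0) (u ! 1))"

definition induced0 :: "('b \<Rightarrow> nat) \<Rightarrow> 'b list \<Rightarrow> nat" where
  "induced0 gt = induced 0 (\<lambda>u. gt (u ! 0))"

definition is_conjugacy ::
  "'a set \<Rightarrow> 'a seq set \<Rightarrow> 'b set \<Rightarrow> 'b seq set \<Rightarrow> ('a seq \<Rightarrow> 'b seq) \<Rightarrow> bool" where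
  "is_conjugacy A X B Y \<phi> \<longleftrightarrow>
     bij_betw \<phi> X Y \<and>
     continuous_map (subtopology (seq_top A) X) (subtopology (seq_top B) Y) \<phi> \<and>
     (\<forall>x\<in>X. \<phi> (shift x) = shift (\<phi> x)) \<and>
     (\<forall>x\<in>X. len (\<phi> x) = len x)"

definition thm_hyps :: "'a set \<Rightarrow> ('a \<Rightarrow> 'a \<Rightarrow> nat) \<Rightarrow> bool" where
  "thm_hyps A ft \<longleftrightarrow>
     (\<forall>x\<in>A. \<forall>y\<in>A. ft x y \<in> {0,1}) \<and>
     (\<forall>x\<in>A. \<exists>y\<in>A. ft x y = 1) \<and>
     finite {x \<in> A. infinite {y \<in> A. ft x y = 1}} \<and>
     {x \<in> A. infinite {y \<in> A. ft x y = 1}} \<noteq> {}"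

definition example_ft :: "'a \<Rightarrow> 'a \<Rightarrow> 'a \<Rightarrow> nat" where
  "example_ft x0 x y = (if x = x0 then 1 else if y = x then 1 else 0)"

end

theory Submission
  imports Defs
begin
lemma induced1_pair: "induced1 ft [a,b] = ft a b"
  by (simp add: induced1_def induced_def)
lemma induced0_single: "induced0 gt [a] = gt a"
  by (simp add: induced0_def induced_def)
lemma path_Xinf:
  assumes "range w \<subseteq> A" "\<forall>n. ft (w n) (w (Suc n)) = 1"
  shows "Inf w \<in> Xinf A (induced1 ft)"
proof -
  have "induced1 ft (map w [i..<i+n]) = 1" for i n
  proof (cases "n \<le> 1")
    case True then show ?thesis by (simp add: induced1_def induced_def)
  next
    case False
    have "\<forall>j\<in>{..<n-1}. (\<lambda>u. ft (u ! 0) (u ! 1)) (take (1+1) (drop j (map w [i..<i+n]))) = 1"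
    proof
      fix j assume "j \<in> {..<n-1}"
      hence "j < n - 1" by simp
      hence "take (1+1) (drop j (map w [i..<i+n])) ! 0 = w (i+j)"
            "take (1+1) (drop j (map w [i..<i+n])) ! 1 = w (Suc (i+j))" by simp_all
      thus "(\<lambda>u. ft (u ! 0) (u ! 1)) (take (1+1) (drop j (map w [i..<i+n]))) = 1"
        using assms(2) by simp
    qed
    then show ?thesis using False unfolding induced1_def induced_def
      by (simp del: One_nat_def)
  qed
  thus ?thesis using assms(1) unfolding Xinf_def by blast
qed
lemma good_Xinf0:
  assumes "range w \<subseteq> B" "\<forall>n. gt (w n) = 1"
  shows "Inf w \<in> Xinf B (induced0 gt)"
proof -
  have "induced0 gt (map w [i..<i+n]) = 1" for i n
    using assms(2) by (simp add: induced0_def induced_def)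
  thus ?thesis using assms(1) unfolding Xinf_def by blast
qed
lemma Xinf_pair: assumes "Inf w \<in> Xinf A (induced1 ft)" shows "ft (w 0) (w 1) = 1"
proof -
  have "\<forall>i n. 1 \<le> n \<longrightarrow> induced1 ft (map w [i..<i+n]) = 1" using assms unfolding Xinf_def by auto
  hence "induced1 ft (map w [0..<0+2]) = 1" by (metis one_le_numeral)
  moreover have "map w [0..<0+2] = [w 0, w 1]" by (simp add: upt_rec)
  ultimately show ?thesis by (simp add: induced1_pair)
qed
lemma Xinf0_good: assumes "Inf w \<in> Xinf B (induced0 gt)" shows "gt (w n) = 1"
proof -
  have "\<forall>i k. 1 \<le> k \<longrightarrow> induced0 gt (map w [i..<i+k]) = 1" using assms unfolding Xinf_def by auto
  hence "induced0 gt (map w [n..<n+1]) = 1" by (metis order_refl)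
  thus ?thesis by (simp add: induced0_single)
qed
lemma Xinf_range: "Inf w \<in> Xinf A f \<Longrightarrow> range w \<subseteq> A"
  unfolding Xinf_def by auto
lemma len1_Fin: "len x = 1 \<Longrightarrow> \<exists>a. x = Fin [a]"
  by (cases x) (auto simp: one_enat_def length_Suc_conv)

lemma lenFin1: "len (Fin [a]) = 1" by (simp add: one_enat_def)

lemma part1:
  assumes H: "thm_hyps A ft"
  shows "{x \<in> Xf A (induced1 ft). len x = 1} = {Fin [a] | a. a \<in> A \<and> infinite {y \<in> A. ft a y = 1}}"
proof -
  define s where "s x = (SOME z. z \<in> A \<and> ft x z = 1)" for x
  have s: "s x \<in> A \<and> ft x (s x) = 1" if "x \<in> A" for x
    using H that unfolding thm_hyps_def s_def by (metis (mono_tags, lifting) someI_ex)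
  have ext: "\<exists>y. range y \<subseteq> A \<and> Inf (conc [a,b] y) \<in> Xinf A (induced1 ft)"
    if ab: "a \<in> A" "b \<in> A" "ft a b = 1" for a b
  proof -
    define y where "y n = (s ^^ Suc n) b" for n
    have yA: "y n \<in> A" for n
    proof -
      have "(s ^^ m) b \<in> A" for m by (induction m) (auto simp: ab s)
      thus ?thesis unfolding y_def by blast
    qed
    have y0: "y 0 = s b" and yS: "y (Suc n) = s (y n)" for n by (simp_all add: y_def)
    define w where "w = conc [a,b] y"
    have w0: "w 0 = a" and w1: "w 1 = b" and wS: "w (Suc (Suc n)) = y n" for n
      by (simp_all add: w_def conc_def)
    have wA: "range w \<subseteq> A"
    proof
      fix z assume "z \<in> range w"
      then obtain n where "z = w n" by auto
      thus "z \<in> A" using ab yA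
        by (cases n rule: nat.exhaust; cases "n - 1" rule: nat.exhaust) (auto simp: w0 wS w1[simplified])
    qed
    have "ft (w n) (w (Suc n)) = 1" for n
    proof (cases n)
      case 0 then show ?thesis using w0 w1 ab by simp
    next
      case (Suc m) then show ?thesis
      proof (cases m)
        case 0 then show ?thesis using Suc w1 wS[of 0] y0 s[OF ab(2)] by simp
      next
        case (Suc k) then show ?thesis using \<open>n = Suc m\<close> wS yS s[OF yA[of k]] by simp
      qed
    qed
    hence "Inf w \<in> Xinf A (induced1 ft)" using wA path_Xinf by blast
    thus ?thesis using yA w_def by blast
  qed
  show ?thesis
  proof (intro set_eqI iffI)
    fix x assume "x \<in> {x \<in> Xf A (induced1 ft). len x = 1}"
    hence x: "x \<in> Xf A (induced1 ft)" "len x = 1" by auto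
    then obtain a where xa: "x = Fin [a]" using len1_Fin by blast
    hence "x \<in> Xfin A (induced1 ft)" using x unfolding Xf_def Xinf_def by auto
    hence aA: "a \<in> A" and inf: "infinite {b \<in> A. \<exists>y. range y \<subseteq> A \<and> Inf (conc ([a] @ [b]) y) \<in> Xinf A (induced1 ft)}"
      unfolding Xfin_def xa by auto
    have "{b \<in> A. \<exists>y. range y \<subseteq> A \<and> Inf (conc ([a] @ [b]) y) \<in> Xinf A (induced1 ft)} \<subseteq> {y \<in> A. ft a y = 1}"
    proof clarify
      fix b y assume "b \<in> A" "Inf (conc ([a] @ [b]) y) \<in> Xinf A (induced1 ft)"
      from Xinf_pair[OF this(2)] show "ft a b = 1" by (simp add: conc_def)
    qed
    hence "infinite {y \<in> A. ft a y = 1}" using inf infinite_super by blast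
    thus "x \<in> {Fin [a] | a. a \<in> A \<and> infinite {y \<in> A. ft a y = 1}}" using aA xa by blast
  next
    fix x assume "x \<in> {Fin [a] | a. a \<in> A \<and> infinite {y \<in> A. ft a y = 1}}"
    then obtain a where xa: "x = Fin [a]" and aA: "a \<in> A" and inf: "infinite {y \<in> A. ft a y = 1}" by blast
    have "{y \<in> A. ft a y = 1} \<subseteq> {b \<in> A. \<exists>y. range y \<subseteq> A \<and> Inf (conc ([a] @ [b]) y) \<in> Xinf A (induced1 ft)}"
      using ext aA by auto
    hence "infinite {b \<in> A. \<exists>y. range y \<subseteq> A \<and> Inf (conc ([a] @ [b]) y) \<in> Xinf A (induced1 ft)}"
      using inf infinite_super by blast
    hence "x \<in> Xfin A (induced1 ft)" unfolding Xfin_def xa using aA by auto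
    thus "x \<in> {x \<in> Xf A (induced1 ft). len x = 1}" unfolding Xf_def using xa lenFin1 by auto
  qed
qed

lemma part0:
  assumes "x \<in> Xf B (induced0 gt)" "len x = 1"
  shows "infinite {x \<in> Xf B (induced0 gt). len x = 1}"
proof -
  obtain b where xb: "x = Fin [b]" using len1_Fin assms(2) by blast
  hence "x \<in> Xfin B (induced0 gt)" using assms unfolding Xf_def Xinf_def by auto
  define T where "T c = {a \<in> B. \<exists>y. range y \<subseteq> B \<and> Inf (conc ([c] @ [a]) y) \<in> Xinf B (induced0 gt)}" for c
  have Tb: "infinite (T b)" using \<open>x \<in> Xfin B (induced0 gt)\<close> unfolding Xfin_def xb T_def by auto
  have Tgood: "a \<in> B \<and> gt a = 1" if "a \<in> T c" for a c
  proof -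
    from that obtain y where aB: "a \<in> B" and "Inf (conc ([c] @ [a]) y) \<in> Xinf B (induced0 gt)"
      unfolding T_def by auto
    from Xinf0_good[OF this(2), of 1] aB show ?thesis by (simp add: conc_def)
  qed
  have sub: "T b \<subseteq> T a" if "a \<in> T b" for a
  proof
    fix c assume "c \<in> T b"
    then obtain y where cB: "c \<in> B" and yB: "range y \<subseteq> B" and yX: "Inf (conc ([b] @ [c]) y) \<in> Xinf B (induced0 gt)"
      unfolding T_def by auto
    have ga: "a \<in> B \<and> gt a = 1" and gc: "c \<in> B \<and> gt c = 1" using Tgood that \<open>c \<in> T b\<close> by auto
    have "range (conc [a,c] y) \<subseteq> B"
      using ga gc yB by (auto simp: conc_def nth_Cons split: nat.splits)
    moreover have "gt (conc [a,c] y n) = 1" for n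
    proof (cases "n < 2")
      case True then show ?thesis using ga gc by (auto simp: conc_def nth_Cons split: nat.splits)
    next
      case False
      have "gt (conc ([b] @ [c]) y n) = 1" using Xinf0_good[OF yX] .
      then show ?thesis using False by (simp add: conc_def)
    qed
    ultimately have "Inf (conc ([a] @ [c]) y) \<in> Xinf B (induced0 gt)" using good_Xinf0[of "conc [a,c] y" B gt] by auto
    thus "c \<in> T a" unfolding T_def using cB yB by auto
  qed
  have "Fin [a] \<in> {x \<in> Xf B (induced0 gt). len x = 1}" if "a \<in> T b" for a
  proof -
    have "infinite (T a)" using sub[OF that] Tb infinite_super by blast
    hence "Fin [a] \<in> Xfin B (induced0 gt)" unfolding Xfin_def T_def using Tgood[OF that] by auto
    thus ?thesis unfolding Xf_def using lenFin1 by auto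
  qed
  hence "(\<lambda>a. Fin [a]) ` T b \<subseteq> {x \<in> Xf B (induced0 gt). len x = 1}" by auto
  moreover have "infinite ((\<lambda>a. Fin [a]) ` T b)"
    using Tb finite_imageD inj_on_def by (metis (no_types, lifting) list.inject seq.inject(1))
  ultimately show ?thesis using infinite_super by blast
qed

theorem mainTheorem4:
  fixes A :: "'a set"
  assumes "infinite A"
  shows "(\<forall>ft. thm_hyps A ft \<longrightarrow>
            finite {x \<in> Xf A (induced1 ft). len x = 1} \<and>
            {x \<in> Xf A (induced1 ft). len x = 1}
              = {Fin [a] | a. a \<in> A \<and> infinite {y \<in> A. ft a y = 1}} \<and>
            (\<forall>(B :: 'b set) gt \<phi>. (\<forall>b\<in>B. gt b \<in> {0,1}) \<longrightarrow>
               \<not> is_conjugacy A (Xf A (induced1 ft)) B (Xf B (induced0 gt)) \<phi>))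
       \<and> (\<forall>x0\<in>A. thm_hyps A (example_ft x0))"
proof (intro conjI allI impI ballI)
  fix ft assume H: "thm_hyps A ft"
  note P = part1[OF H]
  let ?S = "{x \<in> Xf A (induced1 ft). len x = 1}"
  let ?I = "{x \<in> A. infinite {y \<in> A. ft x y = 1}}"
  have "?S = (\<lambda>a. Fin [a]) ` ?I" unfolding P by auto
  moreover have fI: "finite ?I" and neI: "?I \<noteq> {}" using H unfolding thm_hyps_def by auto
  ultimately have fS: "finite ?S" and neS: "?S \<noteq> {}" by auto
  show "finite ?S" by (rule fS)
  show "?S = {Fin [a] | a. a \<in> A \<and> infinite {y \<in> A. ft a y = 1}}" by (rule P)
  fix B :: "'b set" and gt \<phi>
  show "\<not> is_conjugacy A (Xf A (induced1 ft)) B (Xf B (induced0 gt)) \<phi>"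
  proof
    assume C: "is_conjugacy A (Xf A (induced1 ft)) B (Xf B (induced0 gt)) \<phi>"
    let ?T = "{x \<in> Xf B (induced0 gt). len x = 1}"
    have bij: "bij_betw \<phi> (Xf A (induced1 ft)) (Xf B (induced0 gt))"
      and lp: "\<forall>x\<in>Xf A (induced1 ft). len (\<phi> x) = len x" using C unfolding is_conjugacy_def by auto
    have "\<phi> ` ?S = ?T"
    proof
      show "\<phi> ` ?S \<subseteq> ?T" using bij lp bij_betw_apply by fastforce
      show "?T \<subseteq> \<phi> ` ?S"
      proof
        fix y assume "y \<in> ?T"
        then obtain x where "x \<in> Xf A (induced1 ft)" "y = \<phi> x"
          using bij by (metis (no_types, lifting) bij_betw_def imageE mem_Collect_eq)
        thus "y \<in> \<phi> ` ?S" using lp \<open>y \<in> ?T\<close> by auto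
      qed
    qed
    hence TS: "?T = \<phi> ` ?S" by simp
    have "finite ?T" unfolding TS using fS by (rule finite_imageI)
    have "?T \<noteq> {}" unfolding TS using neS by blast
    then obtain y where "y \<in> ?T" by blast
    hence "infinite ?T" using part0 by blast
    thus False using \<open>finite ?T\<close> by simp
  qed
next
  fix x0 assume x0: "x0 \<in> A"
  have I: "{x \<in> A. infinite {y \<in> A. example_ft x0 x y = 1}} = {x0}"
  proof -
    have "{y \<in> A. example_ft x0 x y = 1} = (if x = x0 then A else {x} \<inter> A)" for x
      by (auto simp: example_ft_def)
    thus ?thesis using assms x0 by auto
  qed
  show "thm_hyps A (example_ft x0)"
    unfolding thm_hyps_def I using x0 by (auto simp: example_ft_def)
qed
end
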